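(* Let $n\ge 1$ and let $D_0,D_1,\dots,D_{2n}$ be positive integers. For $i=1,\dots,n$ let $A_i=\{A_i^{s}\}_{s=1}^{d_i}\subset M_{D_{2i-2}\times D_{2i-1}}(\mathbb{C})$ be injective MPS tensors, and let $B_i=\{B_i^{t}\}_{t=1}^{e_i}$ and $B_i'=\{B_i'^{t}\}_{t=1}^{e_i}$ be families in $M_{D_{2i-1}\times D_{2i}}(\mathbb{C})$, with $B_i$ not identically zero for every $i$. Suppose that for all indices $s_1,t_1,\dots,s_n,t_n$, $$A_1^{s_1}B_1^{t_1}A_2^{s_2}B_2^{t_2}\cdots A_n^{s_n}B_n^{t_n}=A_1^{s_1}B_1'^{t_1}A_2^{s_2}B_2'^{t_2}\cdots A_n^{s_n}B_n'^{t_n}$$ (equality of $D_0\times D_{2n}$ matrices). Then there exist nonzero scalars $\beta_1,\dots,\beta_n\in\mathbb{C}$ with $\prod_{i=1}^n\beta_i=1$ such that $B_i^{t}=\beta_i B_i'^{t}$ for all $i$ and all $t$.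
   Context: A family $A=\{A^s\}_{s=1}^{d}\subset M_{D\times D'}(\mathbb{C})$ is called an injective MPS tensor if the linear map $M_{D'\times D}(\mathbb{C})\to\mathbb{C}^d$, $X\mapsto(\mathrm{tr}(XA^s))_{s=1}^d$, is injective; equivalently, the matrices $A^1,\dots,A^d$ span $M_{D\times D'}(\mathbb{C})$. *)

theory Defs
  imports "Jordan_Normal_Form.Matrix"
begin

definition mat_trace :: "complex mat \<Rightarrow> complex" where
  "mat_trace X = (\<Sum>k<dim_row X. X $$ (k, k))"

text \<open>Injective MPS tensor: a family A^0,...,A^(d-1) of D x D' complex matrices such that
  the linear map X |-> (tr (X A^s))_s from D' x D matrices to C^d is injective.
  (Physical indices are 0-based: s < d.)\<close>
definition injective_mps :: "nat \<Rightarrow> nat \<Rightarrow> nat \<Rightarrow> (nat \<Rightarrow> complex mat) \<Rightarrow> bool" where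
  "injective_mps D D' d A \<longleftrightarrow>
     (\<forall>s<d. A s \<in> carrier_mat D D') \<and>
     inj_on (\<lambda>X. vec d (\<lambda>s. mat_trace (X * A s))) (carrier_mat D' D)"

definition chain_prod :: "nat \<Rightarrow> nat \<Rightarrow> (nat \<Rightarrow> complex mat) \<Rightarrow> complex mat" where
  "chain_prod D0 n M = foldl (\<lambda>P i. P * M i) (1\<^sub>m D0) [1..<Suc n]"

end

theory Submission
  imports Defs
begin


lemma entry_trace:
  fixes L Y C :: "complex mat"
  assumes L: "L \<in> carrier_mat p q" and Y: "Y \<in> carrier_mat q r" and C: "C \<in> carrier_mat r s"
    and a: "a < p" and b: "b < s"
  shows "(L * Y * C) $$ (a,b) = mat_trace (mat r q (\<lambda>(j,i). C $$ (j,b) * L $$ (a,i)) * Y)"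
proof -
  have "(L * Y * C) $$ (a,b) = (\<Sum>j<r. (\<Sum>i<q. L $$ (a,i) * Y $$ (i,j)) * C $$ (j,b))"
    using L Y C a b by (simp add: scalar_prod_def atLeast0LessThan sum_distrib_left sum_distrib_right mult_ac sum.swap[of _ "{..<r}"])
  also have "\<dots> = (\<Sum>j<r. (\<Sum>i<q. C $$ (j,b) * L $$ (a,i) * Y $$ (i,j)))"
    by (simp add: sum_distrib_right sum_distrib_left mult_ac)
  also have "\<dots> = mat_trace (mat r q (\<lambda>(j,i). C $$ (j,b) * L $$ (a,i)) * Y)"
    using Y by (simp add: mat_trace_def scalar_prod_def atLeast0LessThan)
  finally show ?thesis .
qed

definition rowm :: "nat \<Rightarrow> nat \<Rightarrow> nat \<Rightarrow> (nat \<Rightarrow> complex) \<Rightarrow> complex mat" where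
  "rowm m q x v = mat m q (\<lambda>(i,j). if i = x then v j else 0)"

lemma rowm_carrier[simp]: "rowm m q x v \<in> carrier_mat m q"
  by (simp add: rowm_def)

lemma rowm_mult:
  assumes M: "M \<in> carrier_mat p q"
  shows "rowm m p x v * M = rowm m q x (\<lambda>j. \<Sum>k<p. v k * M $$ (k,j))"
  using M by (intro eq_matI) (auto simp: rowm_def scalar_prod_def atLeast0LessThan)

lemma rowm_rowm:
  assumes "c < p"
  shows "rowm m p x v * rowm p q c w = rowm m q x (\<lambda>j. v c * w j)"
proof -
  have "rowm m p x v * rowm p q c w = rowm m q x (\<lambda>j. \<Sum>k<p. v k * rowm p q c w $$ (k,j))"
    by (rule rowm_mult) simp
  also have "\<dots> = rowm m q x (\<lambda>j. v c * w j)"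
    unfolding rowm_def using assms
    by (intro eq_matI) (auto simp: if_distrib cong: if_cong)
  finally show ?thesis .
qed



fun pm :: "(nat \<Rightarrow> complex mat) \<Rightarrow> complex mat \<Rightarrow> nat \<Rightarrow> nat \<Rightarrow> complex mat" where
  "pm M X a 0 = X"
| "pm M X a (Suc k) = pm M X a k * M (a + Suc k)"

lemma foldl_pm: "foldl (\<lambda>P i. P * M i) X [Suc a..<Suc (a+k)] = pm M X a k"
  by (induction k) auto

lemma chain_pm: "chain_prod D0 n M = pm M (1\<^sub>m D0) 0 n"
  unfolding chain_prod_def using foldl_pm[of M "1\<^sub>m D0" 0 n] by simp

lemma pm_add: "pm M X a (k + l) = pm M (pm M X a k) (a + k) l"
  by (induction l) (auto simp: add.assoc)

lemma pm_cong: "(\<And>j. a < j \<Longrightarrow> j \<le> a + k \<Longrightarrow> M j = M' j) \<Longrightarrow> pm M X a k = pm M' X a k"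
  by (induction k) auto

lemma pm_carrier:
  assumes "X \<in> carrier_mat m (R a)" "\<And>j. a < j \<Longrightarrow> j \<le> a + k \<Longrightarrow> M j \<in> carrier_mat (R (j-1)) (R j)"
  shows "pm M X a k \<in> carrier_mat m (R (a+k))"
  using assms
proof (induction k)
  case 0 then show ?case by simp
next
  case (Suc k)
  have "pm M X a k \<in> carrier_mat m (R (a+k))" using Suc by auto
  moreover have "M (a + Suc k) \<in> carrier_mat (R (a+k)) (R (a + Suc k))"
    using Suc.prems(2)[of "a + Suc k"] by simp
  ultimately show ?case by auto
qed

lemma pm_shift:
  assumes "X \<in> carrier_mat m p" "Z \<in> carrier_mat p (R a)"
    "\<And>j. a < j \<Longrightarrow> j \<le> a + k \<Longrightarrow> M j \<in> carrier_mat (R (j-1)) (R j)"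
  shows "pm M (X * Z) a k = X * pm M Z a k"
  using assms
proof (induction k)
  case 0 then show ?case by simp
next
  case (Suc k)
  have IH: "pm M (X * Z) a k = X * pm M Z a k" using Suc by auto
  have c: "pm M Z a k \<in> carrier_mat p (R (a+k))"
    using pm_carrier[of Z p R a k M] Suc.prems by auto
  have "M (a + Suc k) \<in> carrier_mat (R (a+k)) (R (a + Suc k))"
    using Suc.prems(3)[of "a + Suc k"] by simp
  then show ?case using IH c Suc.prems(1) by simp
qed

lemma decomp:
  assumes i: "1 \<le> i" "i \<le> n"
    and M: "\<And>j. 1 \<le> j \<Longrightarrow> j \<le> n \<Longrightarrow> M j \<in> carrier_mat (R (j-1)) (R j)"
    and Mi: "M i = Z * W" and Z: "Z \<in> carrier_mat (R (i-1)) p" and W: "W \<in> carrier_mat p (R i)"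
  shows "pm M (1\<^sub>m (R 0)) 0 n = pm M (1\<^sub>m (R 0)) 0 (i-1) * Z * (W * pm M (1\<^sub>m (R i)) i (n-i))"
proof -
  define L where "L = pm M (1\<^sub>m (R 0)) 0 (i-1)"
  have L: "L \<in> carrier_mat (R 0) (R (i-1))"
    unfolding L_def using pm_carrier[of "1\<^sub>m (R 0)" "R 0" R 0 "i-1" M] M i by auto
  have n: "n = (i - 1) + 1 + (n - i)" using i by simp
  have "pm M (1\<^sub>m (R 0)) 0 n = pm M (pm M L (i-1) 1) i (n-i)"
    unfolding L_def using i by (subst n) (simp only: pm_add, simp)
  also have "pm M L (i-1) 1 = L * M i" using i by simp
  also have "\<dots> = (L * Z * W) * 1\<^sub>m (R i)" using L Z W Mi by simp
  also have "pm M \<dots> i (n-i) = (L * Z * W) * pm M (1\<^sub>m (R i)) i (n-i)"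
    by (rule pm_shift[where R=R and p="R i"]) (use L Z W M i in auto)
  also have "\<dots> = L * Z * (W * pm M (1\<^sub>m (R i)) i (n-i))"
  proof -
    have Q: "pm M (1\<^sub>m (R i)) i (n-i) \<in> carrier_mat (R i) (R (i + (n-i)))"
      using pm_carrier[of "1\<^sub>m (R i)" "R i" R i "n-i" M] M i by auto
    have "L * Z * W * pm M (1\<^sub>m (R i)) i (n-i) = (L * Z) * (W * pm M (1\<^sub>m (R i)) i (n-i))"
      by (rule assoc_mult_mat[OF _ W Q]) (use L Z in auto)
    then show ?thesis .
  qed
  finally show ?thesis unfolding L_def .
qed



lemma slot:
  fixes Y F G AA :: "nat \<Rightarrow> complex mat" and R S :: "nat \<Rightarrow> nat"
  assumes i: "1 \<le> i" "i \<le> n"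
    and Y: "\<And>j. 1 \<le> j \<Longrightarrow> j \<le> n \<Longrightarrow> Y j \<in> carrier_mat (R (j-1)) (S j)"
    and F: "\<And>j. 1 \<le> j \<Longrightarrow> j \<le> n \<Longrightarrow> F j \<in> carrier_mat (S j) (R j)"
    and G: "\<And>j. 1 \<le> j \<Longrightarrow> j \<le> n \<Longrightarrow> G j \<in> carrier_mat (S j) (R j)"
    and inj: "injective_mps (R (i-1)) (S i) dd AA"
    and hyp: "\<And>s. s < dd \<Longrightarrow> pm (\<lambda>j. (Y(i := AA s)) j * F j) (1\<^sub>m (R 0)) 0 n
                               = pm (\<lambda>j. (Y(i := AA s)) j * G j) (1\<^sub>m (R 0)) 0 n"
  shows "pm (\<lambda>j. Y j * F j) (1\<^sub>m (R 0)) 0 n = pm (\<lambda>j. Y j * G j) (1\<^sub>m (R 0)) 0 n"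
proof -
  have AA: "\<And>s. s < dd \<Longrightarrow> AA s \<in> carrier_mat (R (i-1)) (S i)"
    using inj unfolding injective_mps_def by auto
  have injon: "inj_on (\<lambda>X. vec dd (\<lambda>s. mat_trace (X * AA s))) (carrier_mat (S i) (R (i-1)))"
    using inj unfolding injective_mps_def by auto
  {
    fix H :: "nat \<Rightarrow> complex mat"
    assume H: "\<And>j. 1 \<le> j \<Longrightarrow> j \<le> n \<Longrightarrow> H j \<in> carrier_mat (S j) (R j)"
    have YH: "\<And>j. 1 \<le> j \<Longrightarrow> j \<le> n \<Longrightarrow> Y j * H j \<in> carrier_mat (R (j-1)) (R j)"
      using Y H by (meson mult_carrier_mat)
    define L where "L = pm (\<lambda>j. Y j * H j) (1\<^sub>m (R 0)) 0 (i-1)"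
    define C where "C = H i * pm (\<lambda>j. Y j * H j) (1\<^sub>m (R i)) i (n-i)"
    have L: "L \<in> carrier_mat (R 0) (R (i-1))"
      unfolding L_def using pm_carrier[of "1\<^sub>m (R 0)" "R 0" R 0 "i-1" "\<lambda>j. Y j * H j"] YH i
      by auto
    have C: "C \<in> carrier_mat (S i) (R n)"
    proof -
      have "pm (\<lambda>j. Y j * H j) (1\<^sub>m (R i)) i (n-i) \<in> carrier_mat (R i) (R (i + (n-i)))"
        using pm_carrier[of "1\<^sub>m (R i)" "R i" R i "n-i" "\<lambda>j. Y j * H j"] YH i by auto
      moreover have "H i \<in> carrier_mat (S i) (R i)" using H i by auto
      ultimately show ?thesis unfolding C_def using i by auto
    qed
    have dec: "pm (\<lambda>j. (Y(i := Z)) j * H j) (1\<^sub>m (R 0)) 0 n = L * Z * C"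
      if Z: "Z \<in> carrier_mat (R (i-1)) (S i)" for Z
    proof -
      have "pm (\<lambda>j. (Y(i := Z)) j * H j) (1\<^sub>m (R 0)) 0 n =
        pm (\<lambda>j. (Y(i := Z)) j * H j) (1\<^sub>m (R 0)) 0 (i-1) * Z *
          (H i * pm (\<lambda>j. (Y(i := Z)) j * H j) (1\<^sub>m (R i)) i (n-i))"
        by (rule decomp[where R=R and p="S i"]) (use i Y H Z in \<open>auto intro!: mult_carrier_mat\<close>)
      also have "pm (\<lambda>j. (Y(i := Z)) j * H j) (1\<^sub>m (R 0)) 0 (i-1) = L"
        unfolding L_def by (rule pm_cong) auto
      also have "pm (\<lambda>j. (Y(i := Z)) j * H j) (1\<^sub>m (R i)) i (n-i) = pm (\<lambda>j. Y j * H j) (1\<^sub>m (R i)) i (n-i)"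
        by (rule pm_cong) auto
      finally show ?thesis unfolding C_def .
    qed
    note LC = L C dec
    have "\<exists>L C. L \<in> carrier_mat (R 0) (R (i-1)) \<and> C \<in> carrier_mat (S i) (R n) \<and>
      (\<forall>Z \<in> carrier_mat (R (i-1)) (S i). pm (\<lambda>j. (Y(i := Z)) j * H j) (1\<^sub>m (R 0)) 0 n = L * Z * C)"
      using L C dec by blast
  } note gen = this
  obtain LF CF where LF: "LF \<in> carrier_mat (R 0) (R (i-1))" and CF: "CF \<in> carrier_mat (S i) (R n)"
    and dF: "\<And>Z. Z \<in> carrier_mat (R (i-1)) (S i) \<Longrightarrow> pm (\<lambda>j. (Y(i := Z)) j * F j) (1\<^sub>m (R 0)) 0 n = LF * Z * CF"
    using gen[of F] F by blast
  obtain LG CG where LG: "LG \<in> carrier_mat (R 0) (R (i-1))" and CG: "CG \<in> carrier_mat (S i) (R n)"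
    and dG: "\<And>Z. Z \<in> carrier_mat (R (i-1)) (S i) \<Longrightarrow> pm (\<lambda>j. (Y(i := Z)) j * G j) (1\<^sub>m (R 0)) 0 n = LG * Z * CG"
    using gen[of G] G by blast
  have Yi: "Y i \<in> carrier_mat (R (i-1)) (S i)" using Y i by auto
  have eF: "pm (\<lambda>j. Y j * F j) (1\<^sub>m (R 0)) 0 n = LF * Y i * CF"
    using dF[OF Yi] by simp
  have eG: "pm (\<lambda>j. Y j * G j) (1\<^sub>m (R 0)) 0 n = LG * Y i * CG"
    using dG[OF Yi] by simp
  have "LF * Y i * CF = LG * Y i * CG"
  proof (rule eq_matI)
    show "dim_row (LF * Y i * CF) = dim_row (LG * Y i * CG)" using LF LG by simp
    show "dim_col (LF * Y i * CF) = dim_col (LG * Y i * CG)" using CF CG by simp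
    fix a b assume "a < dim_row (LG * Y i * CG)" "b < dim_col (LG * Y i * CG)"
    then have a: "a < R 0" and b: "b < R n" using LG CG by auto
    define XF where "XF = mat (S i) (R (i-1)) (\<lambda>(j,k). CF $$ (j,b) * LF $$ (a,k))"
    define XG where "XG = mat (S i) (R (i-1)) (\<lambda>(j,k). CG $$ (j,b) * LG $$ (a,k))"
    have tF: "(LF * Z * CF) $$ (a,b) = mat_trace (XF * Z)" if "Z \<in> carrier_mat (R (i-1)) (S i)" for Z
      unfolding XF_def by (rule entry_trace[OF LF that CF a b])
    have tG: "(LG * Z * CG) $$ (a,b) = mat_trace (XG * Z)" if "Z \<in> carrier_mat (R (i-1)) (S i)" for Z
      unfolding XG_def by (rule entry_trace[OF LG that CG a b])
    have "vec dd (\<lambda>s. mat_trace (XF * AA s)) = vec dd (\<lambda>s. mat_trace (XG * AA s))"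
    proof (rule eq_vecI)
      fix s assume "s < dim_vec (vec dd (\<lambda>s. mat_trace (XG * AA s)))"
      then have s: "s < dd" by simp
      have "mat_trace (XF * AA s) = (LF * AA s * CF) $$ (a,b)" using tF[OF AA[OF s]] by simp
      also have "\<dots> = (LG * AA s * CG) $$ (a,b)" using hyp[OF s] dF[OF AA[OF s]] dG[OF AA[OF s]] by simp
      also have "\<dots> = mat_trace (XG * AA s)" using tG[OF AA[OF s]] by simp
      finally show "vec dd (\<lambda>s. mat_trace (XF * AA s)) $ s = vec dd (\<lambda>s. mat_trace (XG * AA s)) $ s"
        using s by simp
    qed simp
    then have "XF = XG" using injon unfolding XF_def XG_def by (auto dest: inj_onD)
    then show "(LF * Y i * CF) $$ (a,b) = (LG * Y i * CG) $$ (a,b)" using tF[OF Yi] tG[OF Yi] by simp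
  qed
  then show ?thesis using eF eG by simp
qed



definition ysel :: "(nat \<Rightarrow> nat) \<Rightarrow> (nat \<Rightarrow> nat) \<Rightarrow> (nat \<Rightarrow> nat) \<Rightarrow> (nat \<Rightarrow> nat) \<Rightarrow> nat \<Rightarrow> complex mat" where
  "ysel R S r c j = rowm (R (j-1)) (S j) ((c(0 := 0)) (j-1)) (\<lambda>x. if x = r j then 1 else 0)"

lemma dim_rowm[simp]: "dim_row (rowm m q x v) = m" "dim_col (rowm m q x v) = q"
  by (simp_all add: rowm_def)

lemma ysel_carrier: "ysel R S r c j \<in> carrier_mat (R (j-1)) (S j)"
  by (simp add: ysel_def)

lemma sum_delta_mult:
  fixes f :: "nat \<Rightarrow> complex"
  assumes "a < p"
  shows "(\<Sum>k<p. (if k = a then 1 else 0) * f k) = f a"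
proof -
  have "(\<Sum>k<p. (if k = a then 1 else 0) * f k) = (\<Sum>k<p. if k = a then f k else 0)"
    by (rule sum.cong) auto
  also have "\<dots> = f a" using assms by (simp add: sum.delta)
  finally show ?thesis .
qed

lemma ysel_F:
  assumes "F \<in> carrier_mat (S j) (R j)" "r j < S j"
  shows "ysel R S r c j * F = rowm (R (j-1)) (R j) ((c(0 := 0)) (j-1)) (\<lambda>x. F $$ (r j, x))"
  unfolding ysel_def using assms by (simp add: rowm_mult sum_delta_mult)

lemma tensor_prefix:
  assumes F: "\<And>j. 1 \<le> j \<Longrightarrow> j \<le> n \<Longrightarrow> F j \<in> carrier_mat (S j) (R j)"
    and r: "\<And>j. 1 \<le> j \<Longrightarrow> j \<le> n \<Longrightarrow> r j < S j"
    and c: "\<And>j. 1 \<le> j \<Longrightarrow> j \<le> n \<Longrightarrow> c j < R j"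
    and k: "1 \<le> k" "k \<le> n"
  shows "pm (\<lambda>j. ysel R S r c j * F j) (1\<^sub>m (R 0)) 0 k =
     rowm (R 0) (R k) 0 (\<lambda>x. (\<Prod>l\<in>{1..<k}. F l $$ (r l, c l)) * F k $$ (r k, x))"
  using k
proof (induction k)
  case 0 then show ?case by simp
next
  case (Suc k)
  show ?case
  proof (cases "k = 0")
    case True
    then show ?thesis using ysel_F[where F="F 1" and j=1 and R=R and S=S and r=r and c=c] F[of 1] r[of 1] Suc.prems by simp
  next
    case False
    then have IH: "pm (\<lambda>j. ysel R S r c j * F j) (1\<^sub>m (R 0)) 0 k =
      rowm (R 0) (R k) 0 (\<lambda>x. (\<Prod>l\<in>{1..<k}. F l $$ (r l, c l)) * F k $$ (r k, x))"
      using Suc by auto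
    have e: "ysel R S r c (Suc k) * F (Suc k) = rowm (R k) (R (Suc k)) (c k) (\<lambda>x. F (Suc k) $$ (r (Suc k), x))"
      using ysel_F[where F="F (Suc k)" and j="Suc k" and R=R and S=S and r=r and c=c] F[of "Suc k"] r[of "Suc k"] Suc.prems False by simp
    have ck: "c k < R k" using c[of k] False Suc.prems by simp
    have "pm (\<lambda>j. ysel R S r c j * F j) (1\<^sub>m (R 0)) 0 (Suc k) =
      rowm (R 0) (R k) 0 (\<lambda>x. (\<Prod>l\<in>{1..<k}. F l $$ (r l, c l)) * F k $$ (r k, x)) *
      rowm (R k) (R (Suc k)) (c k) (\<lambda>x. F (Suc k) $$ (r (Suc k), x))"
      using IH e by simp
    also have "\<dots> = rowm (R 0) (R (Suc k)) 0 (\<lambda>x. ((\<Prod>l\<in>{1..<k}. F l $$ (r l, c l)) * F k $$ (r k, c k)) * F (Suc k) $$ (r (Suc k), x))"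
      by (simp add: rowm_rowm[OF ck])
    also have "(\<Prod>l\<in>{1..<k}. F l $$ (r l, c l)) * F k $$ (r k, c k) = (\<Prod>l\<in>{1..<Suc k}. F l $$ (r l, c l))"
      using False by (simp add: prod.atLeastLessThan_Suc)
    finally show ?thesis .
  qed
qed

lemma tensor_entry:
  assumes F: "\<And>j. 1 \<le> j \<Longrightarrow> j \<le> n \<Longrightarrow> F j \<in> carrier_mat (S j) (R j)"
    and r: "\<And>j. 1 \<le> j \<Longrightarrow> j \<le> n \<Longrightarrow> r j < S j"
    and c: "\<And>j. 1 \<le> j \<Longrightarrow> j \<le> n \<Longrightarrow> c j < R j"
    and n: "1 \<le> n" and R0: "0 < R 0"
  shows "pm (\<lambda>j. ysel R S r c j * F j) (1\<^sub>m (R 0)) 0 n $$ (0, c n) = (\<Prod>l\<in>{1..n}. F l $$ (r l, c l))"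
proof -
  have "pm (\<lambda>j. ysel R S r c j * F j) (1\<^sub>m (R 0)) 0 n $$ (0, c n)
     = (\<Prod>l\<in>{1..<n}. F l $$ (r l, c l)) * F n $$ (r n, c n)"
  proof -
    have "pm (\<lambda>j. ysel R S r c j * F j) (1\<^sub>m (R 0)) 0 n =
     rowm (R 0) (R n) 0 (\<lambda>x. (\<Prod>l\<in>{1..<n}. F l $$ (r l, c l)) * F n $$ (r n, x))"
      using tensor_prefix[OF F r c n, of n] by simp
    then show ?thesis using c[OF n order_refl] R0 by (simp add: rowm_def)
  qed
  also have "\<dots> = (\<Prod>l\<in>{1..n}. F l $$ (r l, c l))"
    using n by (simp add: prod.atLeastLessThan_Suc atLeastLessThanSuc_atLeastAtMost[symmetric])
  finally show ?thesis .
qed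



lemma factor:
  fixes u w :: "nat \<Rightarrow> 'x \<Rightarrow> complex"
  assumes eq: "\<And>f. (\<forall>i\<in>{1..n}. f i \<in> Dom i) \<Longrightarrow> (\<Prod>i=1..n. u i (f i)) = (\<Prod>i=1..n. w i (f i))"
    and nz: "\<forall>i\<in>{1..n}. \<exists>x\<in>Dom i. u i x \<noteq> 0"
  shows "\<exists>\<beta>. (\<forall>i\<in>{1..n}. \<beta> i \<noteq> 0) \<and> (\<Prod>i=1..n. \<beta> i) = 1 \<and>
           (\<forall>i\<in>{1..n}. \<forall>x\<in>Dom i. u i x = \<beta> i * w i x)"
proof -
  obtain f0 where f0: "\<forall>i\<in>{1..n}. f0 i \<in> Dom i \<and> u i (f0 i) \<noteq> 0"
  proof -
    have "\<forall>i\<in>{1..n}. \<exists>x. x \<in> Dom i \<and> u i x \<noteq> 0" using nz by blast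
    then show ?thesis using that by (metis bchoice)
  qed
  have Ueq: "(\<Prod>i=1..n. u i (f0 i)) = (\<Prod>i=1..n. w i (f0 i))" using eq f0 by blast
  have Unz: "(\<Prod>i=1..n. u i (f0 i)) \<noteq> 0" using f0 by simp
  have wnz: "\<forall>i\<in>{1..n}. w i (f0 i) \<noteq> 0" using Ueq Unz by simp
  define \<beta> where "\<beta> i = u i (f0 i) / w i (f0 i)" for i
  have b1: "\<forall>i\<in>{1..n}. \<beta> i \<noteq> 0" using f0 wnz by (simp add: \<beta>_def)
  have b2: "(\<Prod>i=1..n. \<beta> i) = 1" using Ueq Unz unfolding \<beta>_def by (simp add: prod_dividef)
  have b3: "u i x = \<beta> i * w i x" if i: "i \<in> {1..n}" and x: "x \<in> Dom i" for i x
  proof -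
    define pu where "pu = (\<Prod>j\<in>{1..n}-{i}. u j (f0 j))"
    define pw where "pw = (\<Prod>j\<in>{1..n}-{i}. w j (f0 j))"
    have U: "(\<Prod>j=1..n. u j (f0 j)) = u i (f0 i) * pu"
      unfolding pu_def using i by (simp add: prod.remove)
    have W: "(\<Prod>j=1..n. w j (f0 j)) = w i (f0 i) * pw"
      unfolding pw_def using i by (simp add: prod.remove)
    have "(\<Prod>j=1..n. u j ((f0(i:=x)) j)) = (\<Prod>j=1..n. w j ((f0(i:=x)) j))"
      using eq[of "f0(i:=x)"] f0 x by auto
    moreover have "(\<Prod>j=1..n. u j ((f0(i:=x)) j)) = u i x * pu"
    proof -
      have "(\<Prod>j\<in>{1..n}-{i}. u j ((f0(i:=x)) j)) = pu"
        unfolding pu_def by (rule prod.cong) auto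
      then show ?thesis using i by (simp add: prod.remove)
    qed
    moreover have "(\<Prod>j=1..n. w j ((f0(i:=x)) j)) = w i x * pw"
    proof -
      have "(\<Prod>j\<in>{1..n}-{i}. w j ((f0(i:=x)) j)) = pw"
        unfolding pw_def by (rule prod.cong) auto
      then show ?thesis using i by (simp add: prod.remove)
    qed
    ultimately have e: "u i x * pu = w i x * pw" by simp
    have pu: "pu \<noteq> 0" using U Unz by auto
    have "u i (f0 i) * pu = w i (f0 i) * pw" using U W Ueq by simp
    then have "pw / pu = u i (f0 i) / w i (f0 i)" using pu wnz i by (simp add: field_simps)
    moreover have "u i x = w i x * (pw / pu)" using e pu by (simp add: field_simps)
    ultimately show ?thesis unfolding \<beta>_def by simp
  qed
  show ?thesis using b1 b2 b3 by blast
qed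



theorem lemma1:
  fixes n :: nat and D :: "nat \<Rightarrow> nat" and d e :: "nat \<Rightarrow> nat"
    and A B B' :: "nat \<Rightarrow> nat \<Rightarrow> complex mat"
  assumes "n \<ge> 1"
    and "\<forall>k\<le>2*n. D k > 0"
    and "\<forall>i\<in>{1..n}. injective_mps (D (2*i-2)) (D (2*i-1)) (d i) (A i)"
    and "\<forall>i\<in>{1..n}. \<forall>t<e i. B i t \<in> carrier_mat (D (2*i-1)) (D (2*i))"
    and "\<forall>i\<in>{1..n}. \<forall>t<e i. B' i t \<in> carrier_mat (D (2*i-1)) (D (2*i))"
    and "\<forall>i\<in>{1..n}. \<exists>t<e i. B i t \<noteq> 0\<^sub>m (D (2*i-1)) (D (2*i))"
    and "\<forall>s t. (\<forall>i\<in>{1..n}. s i < d i \<and> t i < e i) \<longrightarrow>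
           chain_prod (D 0) n (\<lambda>i. A i (s i) * B i (t i)) =
           chain_prod (D 0) n (\<lambda>i. A i (s i) * B' i (t i))"
  shows "\<exists>\<beta> :: nat \<Rightarrow> complex. (\<forall>i\<in>{1..n}. \<beta> i \<noteq> 0) \<and> (\<Prod>i=1..n. \<beta> i) = 1 \<and>
           (\<forall>i\<in>{1..n}. \<forall>t<e i. B i t = \<beta> i \<cdot>\<^sub>m B' i t)"
proof -
  note n = assms(1) and Dpos = assms(2) and inj = assms(3) and Bc = assms(4) and B'c = assms(5)
    and Bnz = assms(6) and hyp = assms(7)
  define R where "R j = D (2*j)" for j
  define S where "S j = D (2*j-1)" for j
  have DD: "\<And>i. D (2*i-2) = R (i-1)" unfolding R_def by (simp add: diff_mult_distrib2)
  have S: "\<forall>k\<le>n. \<forall>Y t. (\<forall>i\<in>{1..n}. t i < e i \<and> Y i \<in> carrier_mat (R (i-1)) (S i) \<and>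
          (k < i \<longrightarrow> (\<exists>s<d i. Y i = A i s))) \<longrightarrow>
        pm (\<lambda>i. Y i * B i (t i)) (1\<^sub>m (R 0)) 0 n = pm (\<lambda>i. Y i * B' i (t i)) (1\<^sub>m (R 0)) 0 n"
  proof (rule allI, rule impI)
    fix k assume "k \<le> n"
    then show "\<forall>Y t. (\<forall>i\<in>{1..n}. t i < e i \<and> Y i \<in> carrier_mat (R (i-1)) (S i) \<and>
          (k < i \<longrightarrow> (\<exists>s<d i. Y i = A i s))) \<longrightarrow>
        pm (\<lambda>i. Y i * B i (t i)) (1\<^sub>m (R 0)) 0 n = pm (\<lambda>i. Y i * B' i (t i)) (1\<^sub>m (R 0)) 0 n"
    proof (induction k)
      case 0
      show ?case
      proof (intro allI impI)
        fix Y t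
        assume H: "\<forall>i\<in>{1..n}. t i < e i \<and> Y i \<in> carrier_mat (R (i-1)) (S i) \<and>
          (0 < i \<longrightarrow> (\<exists>s<d i. Y i = A i s))"
        have "\<forall>i\<in>{1..n}. \<exists>s. s < d i \<and> Y i = A i s" using H by auto
        then obtain sf where sf: "\<forall>i\<in>{1..n}. sf i < d i \<and> Y i = A i (sf i)"
          by (metis bchoice)
        have "chain_prod (D 0) n (\<lambda>i. A i (sf i) * B i (t i)) =
           chain_prod (D 0) n (\<lambda>i. A i (sf i) * B' i (t i))"
          by (rule hyp[rule_format]) (use sf H in auto)
        then have "pm (\<lambda>i. A i (sf i) * B i (t i)) (1\<^sub>m (R 0)) 0 n =
           pm (\<lambda>i. A i (sf i) * B' i (t i)) (1\<^sub>m (R 0)) 0 n"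
          unfolding chain_pm R_def by simp
        moreover have "pm (\<lambda>i. A i (sf i) * B i (t i)) (1\<^sub>m (R 0)) 0 n = pm (\<lambda>i. Y i * B i (t i)) (1\<^sub>m (R 0)) 0 n"
          by (rule pm_cong) (use sf in auto)
        moreover have "pm (\<lambda>i. A i (sf i) * B' i (t i)) (1\<^sub>m (R 0)) 0 n = pm (\<lambda>i. Y i * B' i (t i)) (1\<^sub>m (R 0)) 0 n"
          by (rule pm_cong) (use sf in auto)
        ultimately show "pm (\<lambda>i. Y i * B i (t i)) (1\<^sub>m (R 0)) 0 n = pm (\<lambda>i. Y i * B' i (t i)) (1\<^sub>m (R 0)) 0 n"
          by simp
      qed
    next
      case (Suc k)
      note IH = Suc.IH[OF Suc_leD[OF Suc.prems]]
      show ?case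
      proof (intro allI impI)
        fix Y t
        assume H: "\<forall>i\<in>{1..n}. t i < e i \<and> Y i \<in> carrier_mat (R (i-1)) (S i) \<and>
          (Suc k < i \<longrightarrow> (\<exists>s<d i. Y i = A i s))"
        define i where "i = Suc k"
        have i: "1 \<le> i" "i \<le> n" using Suc.prems unfolding i_def by auto
        show "pm (\<lambda>i. Y i * B i (t i)) (1\<^sub>m (R 0)) 0 n = pm (\<lambda>i. Y i * B' i (t i)) (1\<^sub>m (R 0)) 0 n"
        proof (rule slot[where R=R and S=S and dd="d i" and AA="A i" and Y=Y and F="\<lambda>j. B j (t j)" and G="\<lambda>j. B' j (t j)", OF i])
          show "\<And>j. 1 \<le> j \<Longrightarrow> j \<le> n \<Longrightarrow> Y j \<in> carrier_mat (R (j-1)) (S j)" using H by auto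
          show "\<And>j. 1 \<le> j \<Longrightarrow> j \<le> n \<Longrightarrow> B j (t j) \<in> carrier_mat (S j) (R j)"
            using H Bc unfolding S_def R_def by auto
          show "\<And>j. 1 \<le> j \<Longrightarrow> j \<le> n \<Longrightarrow> B' j (t j) \<in> carrier_mat (S j) (R j)"
            using H B'c unfolding S_def R_def by auto
          have "injective_mps (D (2*i-2)) (D (2*i-1)) (d i) (A i)" using inj i by auto
          then show injA: "injective_mps (R (i-1)) (S i) (d i) (A i)"
            unfolding S_def DD[of i] .
          fix s assume s: "s < d i"
          have As: "A i s \<in> carrier_mat (R (i-1)) (S i)" using injA s unfolding injective_mps_def by auto
          have "\<forall>j\<in>{1..n}. t j < e j \<and> (Y(i := A i s)) j \<in> carrier_mat (R (j-1)) (S j) \<and>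
              (k < j \<longrightarrow> (\<exists>s2<d j. (Y(i := A i s)) j = A j s2))"
          proof
            fix j assume j: "j \<in> {1..n}"
            show "t j < e j \<and> (Y(i := A i s)) j \<in> carrier_mat (R (j-1)) (S j) \<and>
              (k < j \<longrightarrow> (\<exists>s2<d j. (Y(i := A i s)) j = A j s2))"
            proof (cases "j = i")
              case True
              then show ?thesis using H j As s by auto
            next
              case False
              then have "k < j \<longrightarrow> Suc k < j" unfolding i_def by auto
              then show ?thesis using H j False by auto
            qed
          qed
          from IH[THEN spec[of _ "Y(i := A i s)"], THEN spec[of _ t], THEN mp, OF this] show "pm (\<lambda>j. (Y(i := A i s)) j * B j (t j)) (1\<^sub>m (R 0)) 0 n =
                     pm (\<lambda>j. (Y(i := A i s)) j * B' j (t j)) (1\<^sub>m (R 0)) 0 n" .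
        qed
      qed
    qed
  qed
  have allY: "pm (\<lambda>i. Y i * B i (t i)) (1\<^sub>m (R 0)) 0 n = pm (\<lambda>i. Y i * B' i (t i)) (1\<^sub>m (R 0)) 0 n"
    if "\<forall>i\<in>{1..n}. t i < e i \<and> Y i \<in> carrier_mat (R (i-1)) (S i)" for Y t
    using S[rule_format, where k=n and Y=Y and t=t] that by auto
  define Dom where "Dom i = {(t,r,c). t < e i \<and> r < S i \<and> c < R i}" for i
  define u where "u i = (\<lambda>(t,r,c). B i t $$ (r,c))" for i
  define w where "w i = (\<lambda>(t,r,c). B' i t $$ (r,c))" for i
  have R0: "0 < R 0" using Dpos unfolding R_def by auto
  have "\<exists>\<beta>. (\<forall>i\<in>{1..n}. \<beta> i \<noteq> 0) \<and> (\<Prod>i=1..n. \<beta> i) = 1 \<and>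
           (\<forall>i\<in>{1..n}. \<forall>x\<in>Dom i. u i x = \<beta> i * w i x)"
  proof (rule factor)
    fix f assume f: "\<forall>i\<in>{1..n}. f i \<in> Dom i"
    define t where "t i = fst (f i)" for i
    define r where "r i = fst (snd (f i))" for i
    define c where "c i = snd (snd (f i))" for i
    have fi: "f i = (t i, r i, c i)" for i unfolding t_def r_def c_def by simp
    have tr: "t i < e i" "r i < S i" "c i < R i" if "i \<in> {1..n}" for i
    proof -
      have "f i \<in> Dom i" using f that by blast
      then show "t i < e i" "r i < S i" "c i < R i" unfolding fi[of i] Dom_def by auto
    qed
    have "(\<Prod>i=1..n. u i (f i)) = (\<Prod>i=1..n. B i (t i) $$ (r i, c i))"
      unfolding u_def fi by simp
    also have "\<dots> = pm (\<lambda>j. ysel R S r c j * B j (t j)) (1\<^sub>m (R 0)) 0 n $$ (0, c n)"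
      by (rule tensor_entry[symmetric]) (use tr Bc n R0 in \<open>auto simp: S_def R_def\<close>)
    also have "pm (\<lambda>j. ysel R S r c j * B j (t j)) (1\<^sub>m (R 0)) 0 n
       = pm (\<lambda>j. ysel R S r c j * B' j (t j)) (1\<^sub>m (R 0)) 0 n"
      by (rule allY) (use tr ysel_carrier in auto)
    also have "\<dots> $$ (0, c n) = (\<Prod>i=1..n. B' i (t i) $$ (r i, c i))"
      by (rule tensor_entry) (use tr B'c n R0 in \<open>auto simp: S_def R_def\<close>)
    also have "\<dots> = (\<Prod>i=1..n. w i (f i))"
      unfolding w_def fi by simp
    finally show "(\<Prod>i=1..n. u i (f i)) = (\<Prod>i=1..n. w i (f i))" .
  next
    show "\<forall>i\<in>{1..n}. \<exists>x\<in>Dom i. u i x \<noteq> 0"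
    proof
      fix i assume i: "i \<in> {1..n}"
      obtain t where t: "t < e i" and nz: "B i t \<noteq> 0\<^sub>m (D (2*i-1)) (D (2*i))" using Bnz i by blast
      have Bt: "B i t \<in> carrier_mat (S i) (R i)" using Bc i t unfolding S_def R_def by auto
      have "\<exists>a b. a < S i \<and> b < R i \<and> B i t $$ (a,b) \<noteq> 0"
      proof (rule ccontr)
        assume "\<not> ?thesis"
        then have "B i t = 0\<^sub>m (D (2*i-1)) (D (2*i))" using Bt unfolding S_def R_def
          by (intro eq_matI) auto
        then show False using nz by simp
      qed
      then obtain a b where "a < S i" "b < R i" "B i t $$ (a,b) \<noteq> 0" by blast
      then show "\<exists>x\<in>Dom i. u i x \<noteq> 0" using t unfolding Dom_def u_def by (intro bexI[of _ "(t,a,b)"]) auto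
    qed
  qed
  then obtain \<beta> where b1: "\<forall>i\<in>{1..n}. \<beta> i \<noteq> 0" and b2: "(\<Prod>i=1..n. \<beta> i) = 1"
    and b3: "\<forall>i\<in>{1..n}. \<forall>x\<in>Dom i. u i x = \<beta> i * w i x" by blast
  have "B i t = \<beta> i \<cdot>\<^sub>m B' i t" if i: "i \<in> {1..n}" and t: "t < e i" for i t
  proof -
    have Bt: "B i t \<in> carrier_mat (S i) (R i)" using Bc i t unfolding S_def R_def by auto
    have B't: "B' i t \<in> carrier_mat (S i) (R i)" using B'c i t unfolding S_def R_def by auto
    show ?thesis
    proof (rule eq_matI)
      fix a b assume "a < dim_row (\<beta> i \<cdot>\<^sub>m B' i t)" "b < dim_col (\<beta> i \<cdot>\<^sub>m B' i t)"
      then have ab: "a < S i" "b < R i" using B't by auto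
      then have "(t,a,b) \<in> Dom i" using t unfolding Dom_def by auto
      then show "B i t $$ (a,b) = (\<beta> i \<cdot>\<^sub>m B' i t) $$ (a,b)"
        using b3 i ab B't unfolding u_def w_def by auto
    qed (use Bt B't in auto)
  qed
  then show ?thesis using b1 b2 by blast
  qed


end
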